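(* Let $\Phi$ be the $m\times n$ adjacency matrix of a $(2k,\epsilon)$-unbalanced expander with left degree $d$, where $0<\epsilon<1/6$, and let $\alpha(\epsilon)=2\epsilon/(1-2\epsilon)$. Let $u,v\in\mathbb{R}^n$ satisfy $\Phi(v-u)=0$ and $\|v\|_1\le\|u\|_1$. Let $S$ be a set of $k$ coordinates on which $|u_i|$ is largest (i.e. $|u_i|\ge|u_{i'}|$ for all $i\in S$, $i'\notin S$). Then $$\|v-u\|_1\le\frac{2}{1-2\alpha(\epsilon)}\,\|u-u_S\|_1,$$ where $u_S$ is the vector equal to $u$ on $S$ and $0$ outside $S$. (In particular, any solution $x_*$ of $\min\|x_*\|_1$ subject to $\Phi x_*=\Phi x$ satisfies $\|x-x_*\|_1\le \frac{2}{1-2\alpha(\epsilon)}\|x-x_k\|_1$, $x_k$ being the best $k$-term approximation of $x$.)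
   Context: A $(k,\epsilon)$-unbalanced expander is a simple bipartite graph $G=(A,B,E)$ in which every vertex of $A$ has exactly $d$ neighbours (left degree $d$) such that for every $X\subseteq A$ with $|X|\le k$, the neighbourhood $N(X)\subseteq B$ satisfies $|N(X)|\ge(1-\epsilon)d|X|$. The adjacency matrix of $G$ (with $A=\{1,\dots,n\}$, $B=\{1,\dots,m\}$) is the $m\times n$ $0$–$1$ matrix with entry $(j,i)$ equal to $1$ iff $(i,j)\in E$. *)

theory Defs
  imports Complex_Main
begin

text \<open>Bipartite graph G = (A,B,E) with A = {1..n} (left), B = {1..m} (right);
  the edge set E is a set of pairs (i,j) with i in A, j in B (hence simple).\<close>

definition neighbours :: "(nat \<times> nat) set \<Rightarrow> nat set \<Rightarrow> nat set" where
  "neighbours E X = {j. \<exists>i\<in>X. (i, j) \<in> E}"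

definition unbalanced_expander ::
  "nat \<Rightarrow> nat \<Rightarrow> (nat \<times> nat) set \<Rightarrow> nat \<Rightarrow> nat \<Rightarrow> real \<Rightarrow> bool" where
  "unbalanced_expander n m E d k \<epsilon> \<longleftrightarrow>
     E \<subseteq> {1..n} \<times> {1..m} \<and>
     (\<forall>i\<in>{1..n}. card (neighbours E {i}) = d) \<and>
     (\<forall>X. X \<subseteq> {1..n} \<and> card X \<le> k \<longrightarrow>
        real (card (neighbours E X)) \<ge> (1 - \<epsilon>) * real d * real (card X))"

definition adj_matrix :: "(nat \<times> nat) set \<Rightarrow> nat \<Rightarrow> nat \<Rightarrow> real" where
  "adj_matrix E j i = (if (i, j) \<in> E then 1 else 0)"

text \<open>Matrix-vector product of an m x n matrix M with a vector x in R^n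
  (vectors are functions on the index set {1..n}); result indexed by {1..m}.\<close>
definition mat_vec :: "nat \<Rightarrow> (nat \<Rightarrow> nat \<Rightarrow> real) \<Rightarrow> (nat \<Rightarrow> real) \<Rightarrow> nat \<Rightarrow> real" where
  "mat_vec n M x j = (\<Sum>i=1..n. M j i * x i)"

definition l1_norm :: "nat \<Rightarrow> (nat \<Rightarrow> real) \<Rightarrow> real" where
  "l1_norm n x = (\<Sum>i=1..n. \<bar>x i\<bar>)"

definition restrict_vec :: "(nat \<Rightarrow> real) \<Rightarrow> nat set \<Rightarrow> nat \<Rightarrow> real" where
  "restrict_vec u S i = (if i \<in> S then u i else 0)"

definition alpha_eps :: "real \<Rightarrow> real" where
  "alpha_eps \<epsilon> = 2 * \<epsilon> / (1 - 2 * \<epsilon>)"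

end

theory Submission imports Defs begin

lemma top_k_exists:
  fixes a :: "nat \<Rightarrow> real"
  assumes "finite U" "k \<le> card U"
  shows "\<exists>X\<subseteq>U. card X = k \<and> (\<forall>x\<in>X. \<forall>z\<in>U-X. a z \<le> a x)"
  using assms(2)
proof (induction k)
  case 0 show ?case by (intro exI[of _ "{}"]) auto
next
  case (Suc k)
  then obtain X where X: "X\<subseteq>U" "card X = k" "\<forall>x\<in>X. \<forall>z\<in>U-X. a z \<le> a x" by auto
  have fin: "finite (U-X)" using assms(1) by auto
  have ne: "U - X \<noteq> {}"
  proof
    assume "U - X = {}"
    then have "U \<subseteq> X" by auto
    then have "card U \<le> card X" by (rule card_mono[OF finite_subset[OF X(1) assms(1)]])
    then show False using Suc.prems X(2) by simp
  qed
  have "Max (a`(U-X)) \<in> a`(U-X)" using fin ne by simp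
  then obtain z where z: "z \<in> U-X" "a z = Max (a`(U-X))" by auto
  have zmax: "\<forall>z'\<in>U-X. a z' \<le> a z"
  proof
    fix z' assume "z' \<in> U - X"
    then show "a z' \<le> a z" unfolding z(2) using fin by (intro Max_ge) auto
  qed
  have fX: "finite X" using X(1) assms(1) finite_subset by blast
  show ?case
  proof (intro exI[of _ "insert z X"] conjI)
    show "insert z X \<subseteq> U" using z X by auto
    show "card (insert z X) = Suc k" using z fX X by simp
    show "\<forall>x\<in>insert z X. \<forall>za\<in>U - insert z X. a za \<le> a x" using zmax X(3) by auto
  qed
qed

lemma top_compare:
  fixes a :: "nat \<Rightarrow> real"
  assumes "finite T" "finite S0" "card T \<le> card S0" "\<forall>x\<in>S0. \<forall>z\<in>T-S0. a z \<le> a x"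
    "\<forall>i. 0 \<le> a i"
  shows "sum a T \<le> sum a S0"
proof -
  have eT: "sum a T = sum a (T \<inter> S0) + sum a (T - S0)"
    using assms(1) by (rule sum.Int_Diff)
  have eS: "sum a S0 = sum a (T \<inter> S0) + sum a (S0 - T)"
    using sum.Int_Diff[OF assms(2), of a T] by (simp add: Int_commute)
  have cc: "card (T - S0) \<le> card (S0 - T)"
  proof -
    have "card (T - S0) = card T - card (T \<inter> S0)" using assms(1) by (simp add: card_Diff_subset_Int)
    moreover have "card (S0 - T) = card S0 - card (S0 \<inter> T)" using assms(2) by (simp add: card_Diff_subset_Int)
    moreover have "S0 \<inter> T = T \<inter> S0" by auto
    moreover have "card (T \<inter> S0) \<le> card T" using assms(1) by (simp add: card_mono)
    ultimately show ?thesis using assms(3) by simp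
  qed
  have "sum a (T - S0) \<le> sum a (S0 - T)"
  proof (cases "T - S0 = {}")
    case True
    have "0 \<le> sum a (S0 - T)" using assms(5) by (simp add: sum_nonneg)
    then show ?thesis by (subst True) simp
  next
    case False
    then have "card (T - S0) > 0" using assms(1) by (simp add: card_gt_0_iff)
    then have ne: "S0 - T \<noteq> {}" using cc by (metis card.empty not_le)
    have fin: "finite (S0 - T)" using assms(2) by simp
    have "Min (a`(S0-T)) \<in> a`(S0-T)" using fin ne by simp
    then obtain x0 where x0: "x0 \<in> S0 - T" "a x0 = Min (a`(S0-T))" by auto
    have "sum a (T - S0) \<le> of_nat (card (T - S0)) * a x0"
      by (rule sum_bounded_above) (use assms(4) x0 in auto)
    also have "\<dots> \<le> of_nat (card (S0 - T)) * a x0"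
      using cc assms(5) by (simp add: mult_right_mono)
    also have "\<dots> \<le> sum a (S0 - T)"
      by (rule sum_bounded_below) (use fin x0 in auto)
    finally show ?thesis .
  qed
  then show ?thesis using eT eS by simp
qed

lemma block_small:
  fixes a w :: "nat \<Rightarrow> real"
  assumes "\<forall>i. 0 \<le> w i" "0 \<le> C" "k > 0" "sum w X \<le> C"
    "\<forall>i\<in>X. a i \<le> M" "real k * M \<le> A" "0 \<le> M"
  shows "(\<Sum>i\<in>X. w i * a i) \<le> C / k * A"
proof -
  have "(\<Sum>i\<in>X. w i * a i) \<le> (\<Sum>i\<in>X. w i * M)"
    by (rule sum_mono) (use assms in \<open>auto intro: mult_left_mono\<close>)
  also have "\<dots> = M * sum w X" by (simp add: sum_distrib_left mult.commute)
  also have "\<dots> \<le> M * C" using assms by (simp add: mult_left_mono)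
  also have "\<dots> = C / k * (k * M)" using assms(3) by simp
  also have "\<dots> \<le> C / k * A" by (rule mult_left_mono[OF assms(6)]) (use assms(2) in simp)
  finally show ?thesis .
qed

lemma block_bound:
  fixes a w :: "nat \<Rightarrow> real" and k :: nat and C :: real
  assumes k: "k > 0" and a0: "\<forall>i. 0 \<le> a i" and w0: "\<forall>i. 0 \<le> w i" and C0: "0 \<le> C"
   and wb: "\<forall>X\<subseteq>U0. card X \<le> k \<longrightarrow> sum w X \<le> C"
  shows "finite U \<Longrightarrow> U \<subseteq> U0 \<Longrightarrow> (\<forall>i\<in>U. a i \<le> M) \<Longrightarrow> real k * M \<le> A \<Longrightarrow> 0 \<le> M
    \<Longrightarrow> (\<Sum>i\<in>U. w i * a i) \<le> C / k * (A + sum a U)"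
proof (induction "card U" arbitrary: U M A rule: less_induct)
  case less
  have Cpos: "0 \<le> C / k" using C0 by simp
  show ?case
  proof (cases "card U \<le> k")
    case True
    have "sum w U \<le> C" using wb less(3) True by blast
    then have "(\<Sum>i\<in>U. w i * a i) \<le> C / k * A"
      by (rule block_small[OF w0 C0 k _ less(4,5,6)])
    also have "\<dots> \<le> C / k * (A + sum a U)"
      by (rule mult_left_mono[OF _ Cpos]) (use a0 in \<open>simp add: sum_nonneg\<close>)
    finally show ?thesis .
  next
    case False
    obtain X where X: "X \<subseteq> U" "card X = k" "\<forall>x\<in>X. \<forall>z\<in>U-X. a z \<le> a x"
      using top_k_exists[OF less(2), of k a] False by auto
    have fX: "finite X" using X(1) less(2) finite_subset by blast
    have wX: "sum w X \<le> C" using wb less(3) X(1,2) by auto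
    have aX: "\<forall>i\<in>X. a i \<le> M" using less(4) X(1) by auto
    have s1: "(\<Sum>i\<in>X. w i * a i) \<le> C / k * A"
      by (rule block_small[OF w0 C0 k wX aX less(5,6)])
    have lt: "card (U - X) < card U"
      using X k less(2) False by (simp add: card_Diff_subset fX)
    have s2: "(\<Sum>i\<in>U-X. w i * a i) \<le> C / k * (sum a X + sum a (U - X))"
    proof (rule less(1)[OF lt, where M="sum a X / k"])
      show "finite (U - X)" using less(2) by simp
      show "U - X \<subseteq> U0" using less(3) by auto
      show "\<forall>i\<in>U - X. a i \<le> sum a X / real k"
      proof
        fix i assume i: "i \<in> U - X"
        have "of_nat (card X) * a i \<le> sum a X"
          by (rule sum_bounded_below) (use X(3) i in auto)
        then show "a i \<le> sum a X / real k" using X(2) k by (simp add: field_simps)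
      qed
      show "real k * (sum a X / real k) \<le> sum a X" using k by simp
      show "0 \<le> sum a X / real k" using a0 by (simp add: sum_nonneg)
    qed
    have "(\<Sum>i\<in>U. w i * a i) = (\<Sum>i\<in>X. w i * a i) + (\<Sum>i\<in>U-X. w i * a i)"
      by (simp add: sum.subset_diff[OF X(1) less(2)])
    also have "\<dots> \<le> C / k * A + C / k * (sum a X + sum a (U - X))" using s1 s2 by simp
    also have "\<dots> = C / k * (A + sum a U)"
      using less(2) X(1) by (simp add: sum.subset_diff[of X U a] algebra_simps)
    finally show ?thesis .
  qed
qed


lemma ue_E: "unbalanced_expander n m E d K \<epsilon> \<Longrightarrow> E \<subseteq> {1..n}\<times>{1..m}"
  by (simp add: unbalanced_expander_def)
lemma ue_deg: "unbalanced_expander n m E d K \<epsilon> \<Longrightarrow> i \<in> {1..n} \<Longrightarrow> card (neighbours E {i}) = d"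
  by (simp add: unbalanced_expander_def)
lemma ue_exp:
  assumes "unbalanced_expander n m E d K \<epsilon>" "X \<subseteq> {1..n}" "card X \<le> K"
  shows "(1 - \<epsilon>) * real d * real (card X) \<le> real (card (neighbours E X))"
proof -
  have "\<forall>X. X \<subseteq> {1..n} \<and> card X \<le> K \<longrightarrow>
        real (card (neighbours E X)) \<ge> (1 - \<epsilon>) * real d * real (card X)"
    using assms(1) unfolding unbalanced_expander_def by (elim conjE)
  then show ?thesis using assms(2,3) by blast
qed

lemma N_sub: "E \<subseteq> {1..n}\<times>{1..m} \<Longrightarrow> neighbours E X \<subseteq> {1..m}"
  by (auto simp: neighbours_def)
lemma N_fin: assumes "E \<subseteq> {1..n}\<times>{1..m}" shows "finite (neighbours E X)"
  by (rule finite_subset[OF N_sub[OF assms]]) simp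
lemma N_insert: "neighbours E (insert z X) = neighbours E {z} \<union> neighbours E X"
  by (auto simp: neighbours_def)
lemma N_Un: "neighbours E (X \<union> Y) = neighbours E X \<union> neighbours E Y"
  by (auto simp: neighbours_def)
lemma N_UN: "neighbours E X = (\<Union>i\<in>X. neighbours E {i})"
  by (auto simp: neighbours_def)
lemma N_single: "j \<in> neighbours E {i} \<longleftrightarrow> (i, j) \<in> E"
  by (auto simp: neighbours_def)

lemma N_card_le:
  assumes "unbalanced_expander n m E d K \<epsilon>" "finite X" "X \<subseteq> {1..n}"
  shows "card (neighbours E X) \<le> d * card X"
proof -
  have "card (neighbours E X) = card (\<Union>i\<in>X. neighbours E {i})" by (rule arg_cong[OF N_UN])
  also have "\<dots> \<le> (\<Sum>i\<in>X. card (neighbours E {i}))" by (rule card_UN_le[OF assms(2)])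
  also have "\<dots> = (\<Sum>i\<in>X. d)" using ue_deg[OF assms(1)] assms(3) by (intro sum.cong) auto
  finally show ?thesis by (simp add: mult.commute)
qed

lemma alg_step:
  fixes Hi HS ax r q s c p A \<mu> :: real
  assumes "Hi = HS + ax*(r - q)" "s = c*(p+1) - r" "c*A - ax*(c*p - q) \<le> HS" "(ax - \<mu>)*s \<le> 0"
  shows "c*(A+ax) - \<mu>*s \<le> Hi"
proof -
  have "Hi - (c*(A+ax) - \<mu>*s) = (HS - (c*A - ax*(c*p - q))) - (ax - \<mu>)*s"
    unfolding assms(1,2) by (simp add: algebra_simps)
  then show ?thesis using assms(3,4) by linarith
qed

definition Hs :: "(nat \<times> nat) set \<Rightarrow> (nat \<Rightarrow> real) \<Rightarrow> nat set \<Rightarrow> real" where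
  "Hs E a X = (\<Sum>j\<in>neighbours E X. Max (a ` {i\<in>X. (i,j)\<in>E}))"

lemma Hs_insert:
  assumes fE: "E \<subseteq> {1..n}\<times>{1..m}" and fX: "finite X" and z: "z \<notin> X"
    and zmin: "\<forall>y\<in>X. a z \<le> a y"
  shows "Hs E a (insert z X) = Hs E a X
     + a z * (real (card (neighbours E (insert z X))) - real (card (neighbours E X)))"
proof -
  define NX where "NX = neighbours E X"
  define NZ where "NZ = neighbours E {z} - NX"
  have eq: "neighbours E (insert z X) = NX \<union> NZ" unfolding NX_def NZ_def using N_insert by blast
  have fin: "finite NX" "finite NZ" unfolding NX_def NZ_def using N_fin[OF fE] by auto
  have dis: "NX \<inter> NZ = {}" unfolding NZ_def by auto
  have c: "card (neighbours E (insert z X)) = card NX + card NZ"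
    unfolding eq using fin dis by (simp add: card_Un_disjoint)
  have s1: "(\<Sum>j\<in>NX. Max (a ` {i\<in>insert z X. (i,j)\<in>E})) = (\<Sum>j\<in>NX. Max (a ` {i\<in>X. (i,j)\<in>E}))"
  proof (rule sum.cong[OF refl])
    fix j assume j: "j \<in> NX"
    define B where "B = {i\<in>X. (i,j)\<in>E}"
    have fB: "finite B" unfolding B_def using fX by simp
    have nB: "B \<noteq> {}" using j unfolding B_def NX_def neighbours_def by auto
    then obtain b where b: "b \<in> B" by auto
    have "a z \<le> a b" using zmin b unfolding B_def by auto
    also have "a b \<le> Max (a ` B)" using fB b by simp
    finally have le: "a z \<le> Max (a ` B)" .
    show "Max (a ` {i\<in>insert z X. (i,j)\<in>E}) = Max (a ` {i\<in>X. (i,j)\<in>E})"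
    proof (cases "(z,j) \<in> E")
      case True
      then have "{i\<in>insert z X. (i,j)\<in>E} = insert z B" unfolding B_def by auto
      then have "Max (a ` {i\<in>insert z X. (i,j)\<in>E}) = max (a z) (Max (a ` B))"
        using fB nB by simp
      then show ?thesis using le unfolding B_def by simp
    next
      case False
      then have "{i\<in>insert z X. (i,j)\<in>E} = B" unfolding B_def by auto
      then show ?thesis unfolding B_def by simp
    qed
  qed
  have s2: "(\<Sum>j\<in>NZ. Max (a ` {i\<in>insert z X. (i,j)\<in>E})) = (\<Sum>j\<in>NZ. a z)"
  proof (rule sum.cong[OF refl])
    fix j assume j: "j \<in> NZ"
    have "{i\<in>insert z X. (i,j)\<in>E} = {z}" using j unfolding NZ_def NX_def neighbours_def by auto
    then show "Max (a ` {i\<in>insert z X. (i,j)\<in>E}) = a z" by simp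
  qed
  have "Hs E a (insert z X) = (\<Sum>j\<in>NX. Max (a ` {i\<in>insert z X. (i,j)\<in>E}))
      + (\<Sum>j\<in>NZ. Max (a ` {i\<in>insert z X. (i,j)\<in>E}))"
    unfolding Hs_def eq by (rule sum.union_disjoint[OF fin dis])
  also have "\<dots> = (\<Sum>j\<in>NX. Max (a ` {i\<in>X. (i,j)\<in>E})) + (\<Sum>j\<in>NZ. a z)"
    by (simp only: s1 s2)
  also have "\<dots> = Hs E a X + real (card NZ) * a z" unfolding Hs_def NX_def by simp
  finally have h: "Hs E a (insert z X) = Hs E a X + real (card NZ) * a z" .
  have cz: "real (card NZ) = real (card (neighbours E (insert z X))) - real (card (neighbours E X))"
    using c unfolding NX_def by simp
  show ?thesis unfolding h cz by (simp only: mult.commute)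
qed

lemma H_bound_gen:
  assumes ue: "unbalanced_expander n m E d K \<epsilon>" and a0: "\<forall>i. 0 \<le> a i" and fX: "finite X"
  shows "X \<subseteq> {1..n} \<longrightarrow> card X \<le> K \<longrightarrow> (\<forall>\<mu>. 0 \<le> \<mu> \<longrightarrow> (\<forall>x\<in>X. \<mu> \<le> a x) \<longrightarrow>
     (1-\<epsilon>)*d*sum a X - \<mu>*((1-\<epsilon>)*d*card X - card (neighbours E X)) \<le> Hs E a X)"
  using fX
proof (induction rule: finite_ranking_induct[where f="\<lambda>x. - a x"])
  case empty
  then show ?case by (simp add: Hs_def neighbours_def)
next
  case (insert x S)
  show ?case
  proof (cases "x \<in> S")
    case True then show ?thesis using insert by (simp add: insert_absorb)
  next
    case False
    show ?thesis
    proof (intro impI allI)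
      fix \<mu> assume sub: "insert x S \<subseteq> {1..n}" and cS: "card (insert x S) \<le> K"
        and mu0: "0 \<le> \<mu>" and mua: "\<forall>y\<in>insert x S. \<mu> \<le> a y"
      have cins: "card (insert x S) = card S + 1" using False insert(1) by simp
      have xmin: "\<forall>y\<in>S. a x \<le> a y" using insert(2) by force
      have Ssub: "S \<subseteq> {1..n}" using sub by auto
      have cS': "card S \<le> K" using cS cins by simp
      have IH: "(1-\<epsilon>)*d*sum a S - a x*((1-\<epsilon>)*d*card S - card (neighbours E S)) \<le> Hs E a S"
        by (rule insert(3)[rule_format, OF Ssub cS']) (use a0 xmin in auto)
      have Hi: "Hs E a (insert x S) = Hs E a S
         + a x * (real (card (neighbours E (insert x S))) - real (card (neighbours E S)))"
        by (rule Hs_insert[OF ue_E[OF ue] insert(1) False xmin])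
      define s where "s = (1-\<epsilon>)*d*card (insert x S) - real (card (neighbours E (insert x S)))"
      have sle: "s \<le> 0" unfolding s_def using ue_exp[OF ue sub cS] by simp
      have prod: "(a x - \<mu>) * s \<le> 0"
        by (rule mult_nonneg_nonpos) (use mua sle in auto)
      have sa: "sum a (insert x S) = sum a S + a x" using False insert(1) by simp
      have "(1-\<epsilon>)*d*(sum a S + a x) - \<mu>*s \<le> Hs E a (insert x S)"
        by (rule alg_step[OF Hi _ IH prod]) (simp add: s_def cins)
      then show "(1-\<epsilon>)*d*sum a (insert x S) - \<mu>*((1-\<epsilon>)*d*card (insert x S) - card (neighbours E (insert x S)))
          \<le> Hs E a (insert x S)"
        unfolding sa s_def .
    qed
  qed
qed


lemma wbound:
  assumes ue: "unbalanced_expander n m E d (2*k) \<epsilon>" and e0: "0 \<le> \<epsilon>"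
    and S0: "S0 \<subseteq> {1..n}" "card S0 = k"
    and X: "X \<subseteq> {1..n} - S0" "card X \<le> k"
  shows "(\<Sum>i\<in>X. real (card {j\<in>neighbours E S0. (i,j)\<in>E})) \<le> 2*\<epsilon>*d*k"
proof -
  have fE: "E \<subseteq> {1..n}\<times>{1..m}" by (rule ue_E[OF ue])
  have fX: "finite X" by (rule finite_subset[OF X(1)]) simp
  have fS0: "finite S0" by (rule finite_subset[OF S0(1)]) simp
  define NS where "NS = neighbours E S0"
  have fNS: "finite NS" unfolding NS_def by (rule N_fin[OF fE])
  have Xn: "X \<subseteq> {1..n}" using X(1) by blast
  have w_eq: "real (card {j\<in>NS. (i,j)\<in>E}) = real d - real (card (neighbours E {i} - NS))"
    if i: "i \<in> X" for i
  proof -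
    have in_n: "i \<in> {1..n}" using i Xn by blast
    have e1: "{j\<in>NS. (i,j)\<in>E} = neighbours E {i} \<inter> NS" by (auto simp: neighbours_def)
    have fi: "finite (neighbours E {i})" by (rule N_fin[OF fE])
    have "card (neighbours E {i}) = card (neighbours E {i} \<inter> NS) + card (neighbours E {i} - NS)"
      using fi by (metis card_Int_Diff)
    then show ?thesis unfolding e1 using ue_deg[OF ue in_n] by simp
  qed
  have sw: "(\<Sum>i\<in>X. real (card {j\<in>NS. (i,j)\<in>E}))
      = real d * real (card X) - (\<Sum>i\<in>X. real (card (neighbours E {i} - NS)))"
  proof -
    have "(\<Sum>i\<in>X. real (card {j\<in>NS. (i,j)\<in>E})) = (\<Sum>i\<in>X. real d - real (card (neighbours E {i} - NS)))"
      by (rule sum.cong[OF refl]) (rule w_eq)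
    also have "\<dots> = real d * real (card X) - (\<Sum>i\<in>X. real (card (neighbours E {i} - NS)))"
      by (simp add: sum_subtractf mult.commute)
    finally show ?thesis .
  qed
  have un: "(\<Union>i\<in>X. neighbours E {i} - NS) = neighbours E X - NS" by (auto simp: neighbours_def)
  have P: "real (card (neighbours E X - NS)) \<le> (\<Sum>i\<in>X. real (card (neighbours E {i} - NS)))"
  proof -
    have "card (neighbours E X - NS) \<le> (\<Sum>i\<in>X. card (neighbours E {i} - NS))"
      unfolding un[symmetric] by (rule card_UN_le[OF fX])
    then show ?thesis by (simp add: of_nat_sum[symmetric] del: of_nat_sum)
  qed
  have nu: "neighbours E (X \<union> S0) = (neighbours E X - NS) \<union> NS" unfolding NS_def N_Un by blast
  have cu: "card (neighbours E (X \<union> S0)) = card (neighbours E X - NS) + card NS"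
    unfolding nu by (rule card_Un_disjoint) (use fNS N_fin[OF fE, of X] in auto)
  have dis: "X \<inter> S0 = {}" using X(1) by blast
  have cXS: "card (X \<union> S0) = card X + k" using card_Un_disjoint[OF fX fS0 dis] S0(2) by simp
  have XSn: "X \<union> S0 \<subseteq> {1..n}" using Xn S0(1) by blast
  have ex: "(1-\<epsilon>)*real d*real (card (X \<union> S0)) \<le> real (card (neighbours E (X \<union> S0)))"
    by (rule ue_exp[OF ue XSn]) (use cXS X(2) in simp)
  have nsle: "card NS \<le> d * k" unfolding NS_def using N_card_le[OF ue fS0 S0(1)] S0(2) by simp
  define x where "x = real (card X)"
  define K where "K = real k"
  define D where "D = real d"
  have ex': "(1-\<epsilon>)*D*(x+K) \<le> real (card (neighbours E X - NS)) + real (card NS)"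
    using ex unfolding cXS cu x_def K_def D_def by simp
  have ns': "real (card NS) \<le> D*K" unfolding D_def K_def using nsle
    by (metis of_nat_le_iff of_nat_mult)
  have alg: "D*x - (1-\<epsilon>)*D*(x+K) + D*K = \<epsilon>*D*(x+K)" by (simp add: algebra_simps)
  have xk: "x \<le> K" unfolding x_def K_def using X(2) by simp
  have "\<epsilon>*D*(x+K) \<le> \<epsilon>*D*(K+K)"
    by (rule mult_left_mono) (use xk e0 in \<open>auto simp: D_def\<close>)
  then have fin: "D*x - (1-\<epsilon>)*D*(x+K) + D*K \<le> 2*\<epsilon>*D*K" unfolding alg by (simp add: algebra_simps)
  have "(\<Sum>i\<in>X. real (card {j\<in>NS. (i,j)\<in>E})) \<le> 2*\<epsilon>*D*K"
    unfolding sw using P ex' ns' fin unfolding x_def D_def by linarith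
  then show ?thesis unfolding NS_def D_def K_def .
qed

lemma nsp:
  fixes y :: "nat \<Rightarrow> real"
  assumes ue: "unbalanced_expander n m E d (2*k) \<epsilon>" and d0: "d > 0" and e0: "0 < \<epsilon>"
    and e1: "\<epsilon> < 1/2" and k0: "k > 0"
    and null: "\<forall>j\<in>{1..m}. (\<Sum>i\<in>{1..n}. adj_matrix E j i * y i) = 0"
    and S0: "S0 \<subseteq> {1..n}" "card S0 = k"
    and top: "\<forall>x\<in>S0. \<forall>z\<in>{1..n}-S0. \<bar>y z\<bar> \<le> \<bar>y x\<bar>"
  shows "(\<Sum>i\<in>S0. \<bar>y i\<bar>) \<le> 2*\<epsilon>/(1-2*\<epsilon>) * (\<Sum>i\<in>{1..n}. \<bar>y i\<bar>)"
proof -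
  define a where "a = (\<lambda>i. \<bar>y i\<bar>)"
  have a0: "\<forall>i. 0 \<le> a i" unfolding a_def by simp
  have fE: "E \<subseteq> {1..n}\<times>{1..m}" by (rule ue_E[OF ue])
  have fS0: "finite S0" by (rule finite_subset[OF S0(1)]) simp
  define NS where "NS = neighbours E S0"
  have fNS: "finite NS" unfolding NS_def by (rule N_fin[OF fE])
  define R where "R = (\<lambda>j. {i\<in>{1..n}. (i,j)\<in>E})"
  have fR: "finite (R j)" for j unfolding R_def by simp
  have null2: "2 * Max (a ` {i\<in>S0. (i,j)\<in>E}) \<le> sum a (R j)" if j: "j \<in> NS" for j
  proof -
    have jm: "j \<in> {1..m}" using N_sub[OF fE] j unfolding NS_def by blast
    have "sum y (R j) = (\<Sum>i\<in>{1..n}. if (i,j)\<in>E then y i else 0)"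
      unfolding R_def by (rule sum.inter_filter) simp
    also have "\<dots> = (\<Sum>i\<in>{1..n}. adj_matrix E j i * y i)"
      by (rule sum.cong[OF refl]) (simp add: adj_matrix_def)
    also have "\<dots> = 0" using null jm by blast
    finally have s0: "sum y (R j) = 0" .
    define B where "B = {i\<in>S0. (i,j)\<in>E}"
    have fB: "finite B" unfolding B_def using fS0 by simp
    have nB: "B \<noteq> {}" using j unfolding B_def NS_def neighbours_def by auto
    have "Max (a ` B) \<in> a ` B" using fB nB by simp
    then obtain i0 where i0: "i0 \<in> B" "a i0 = Max (a ` B)" by auto
    have i0R: "i0 \<in> R j" using i0(1) S0(1) unfolding B_def R_def by auto
    have "sum y (R j) = y i0 + sum y (R j - {i0})" by (rule sum.remove[OF fR i0R])
    then have "y i0 = - sum y (R j - {i0})" using s0 by simp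
    then have "a i0 \<le> sum a (R j - {i0})" unfolding a_def by (simp add: sum_abs)
    moreover have "sum a (R j) = a i0 + sum a (R j - {i0})" by (rule sum.remove[OF fR i0R])
    ultimately show ?thesis using i0(2) unfolding B_def by simp
  qed
  define w where "w = (\<lambda>i. real (card {j\<in>NS. (i,j)\<in>E}))"
  have w0: "\<forall>i. 0 \<le> w i" unfolding w_def by simp
  have dc: "(\<Sum>j\<in>NS. sum a (R j)) = (\<Sum>i\<in>{1..n}. a i * w i)"
  proof -
    have "(\<Sum>j\<in>NS. sum a (R j)) = (\<Sum>j\<in>NS. \<Sum>i\<in>{i. i\<in>{1..n} \<and> (i,j)\<in>E}. a i)"
      unfolding R_def by simp
    also have "\<dots> = (\<Sum>i\<in>{1..n}. \<Sum>j\<in>{j. j\<in>NS \<and> (i,j)\<in>E}. a i)"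
      by (rule sum.swap_restrict[OF fNS]) simp
    also have "\<dots> = (\<Sum>i\<in>{1..n}. a i * w i)"
      unfolding w_def by (rule sum.cong[OF refl]) (simp add: mult.commute)
    finally show ?thesis .
  qed
  have split: "(\<Sum>i\<in>{1..n}. a i * w i) = real d * sum a S0 + (\<Sum>i\<in>{1..n}-S0. w i * a i)"
  proof -
    have "(\<Sum>i\<in>{1..n}. a i * w i) = (\<Sum>i\<in>{1..n}-S0. a i * w i) + (\<Sum>i\<in>S0. a i * w i)"
      by (rule sum.subset_diff[OF S0(1)]) simp
    moreover have "(\<Sum>i\<in>S0. a i * w i) = (\<Sum>i\<in>S0. real d * a i)"
    proof (rule sum.cong[OF refl])
      fix i assume i: "i \<in> S0"
      have "{j\<in>NS. (i,j)\<in>E} = neighbours E {i}" using i unfolding NS_def neighbours_def by auto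
      moreover have "card (neighbours E {i}) = d" using ue_deg[OF ue] i S0(1) by blast
      ultimately show "a i * w i = real d * a i" unfolding w_def by simp
    qed
    moreover have "(\<Sum>i\<in>{1..n}-S0. a i * w i) = (\<Sum>i\<in>{1..n}-S0. w i * a i)"
      by (simp add: mult.commute)
    ultimately show ?thesis by (simp add: sum_distrib_left)
  qed
  have c2k: "card S0 \<le> 2*k" using S0(2) by simp
  have "(1-\<epsilon>)*d*sum a S0 - 0*((1-\<epsilon>)*d*card S0 - card (neighbours E S0)) \<le> Hs E a S0"
    by (rule H_bound_gen[OF ue a0 fS0, rule_format, OF S0(1) c2k]) (use a0 in auto)
  then have H1: "(1-\<epsilon>)*d*sum a S0 \<le> Hs E a S0" by simp
  have H2: "2 * Hs E a S0 \<le> (\<Sum>j\<in>NS. sum a (R j))"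
  proof -
    have "2 * Hs E a S0 = (\<Sum>j\<in>NS. 2 * Max (a ` {i\<in>S0. (i,j)\<in>E}))"
      unfolding Hs_def NS_def by (simp add: sum_distrib_left)
    also have "\<dots> \<le> (\<Sum>j\<in>NS. sum a (R j))" by (rule sum_mono) (rule null2)
    finally show ?thesis .
  qed
  define A where "A = sum a S0"
  define Oc where "Oc = sum a ({1..n} - S0)"
  have wb: "\<forall>X\<subseteq>{1..n}-S0. card X \<le> k \<longrightarrow> sum w X \<le> 2*\<epsilon>*d*k"
  proof (intro allI impI)
    fix X assume "X \<subseteq> {1..n}-S0" "card X \<le> k"
    then show "sum w X \<le> 2*\<epsilon>*d*k" unfolding w_def NS_def
      using wbound[OF ue _ S0] e0 by simp
  qed
  have Mb: "\<forall>i\<in>{1..n}-S0. a i \<le> A / real k"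
  proof
    fix i assume i: "i \<in> {1..n}-S0"
    have "of_nat (card S0) * a i \<le> sum a S0"
      by (rule sum_bounded_below) (use top i in \<open>auto simp: a_def\<close>)
    then show "a i \<le> A / real k" unfolding A_def using S0(2) k0 by (simp add: field_simps)
  qed
  have C0: "0 \<le> 2*\<epsilon>*real d*real k" using e0 by simp
  have bb: "(\<Sum>i\<in>{1..n}-S0. w i * a i) \<le> (2*\<epsilon>*d*k) / k * (A + Oc)"
    unfolding Oc_def
    by (rule block_bound[OF k0 a0 w0 C0 wb _ subset_refl Mb])
       (use k0 a0 in \<open>simp_all add: A_def sum_nonneg\<close>)
  have bb': "(\<Sum>i\<in>{1..n}-S0. w i * a i) \<le> 2*\<epsilon>*d*(A + Oc)" using bb k0 by simp
  define Dr where "Dr = real d"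
  have Dpos: "0 < Dr" unfolding Dr_def using d0 by simp
  have main: "2*((1-\<epsilon>)*Dr*A) \<le> Dr*A + 2*\<epsilon>*Dr*(A+Oc)"
    using H1 H2 dc split bb' unfolding A_def Dr_def by linarith
  have "Dr * ((1-2*\<epsilon>)*A - 2*\<epsilon>*(A+Oc)) = 2*((1-\<epsilon>)*Dr*A) - (Dr*A + 2*\<epsilon>*Dr*(A+Oc))"
    by (simp add: algebra_simps)
  then have "Dr * ((1-2*\<epsilon>)*A - 2*\<epsilon>*(A+Oc)) \<le> Dr * 0" using main by linarith
  then have "(1-2*\<epsilon>)*A - 2*\<epsilon>*(A+Oc) \<le> 0" by (simp only: mult_le_cancel_left_pos[OF Dpos])
  then have "(1-2*\<epsilon>)*A \<le> 2*\<epsilon>*(A+Oc)" by linarith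
  then have "A \<le> 2*\<epsilon>*(A+Oc) / (1-2*\<epsilon>)" using e1 by (simp add: pos_le_divide_eq mult.commute)
  moreover have "sum a {1..n} = A + Oc"
    unfolding A_def Oc_def using sum.subset_diff[OF S0(1), of a] by simp
  ultimately show ?thesis unfolding a_def A_def by simp
qed

theorem theorem3:
  fixes n m d k :: nat and E :: "(nat \<times> nat) set" and \<epsilon> :: real
    and u v :: "nat \<Rightarrow> real" and S :: "nat set"
  assumes expander: "unbalanced_expander n m E d (2 * k) \<epsilon>"
    and d_pos: "d > 0"
    and eps_pos: "0 < \<epsilon>" and eps_small: "\<epsilon> < 1 / 6"
    and null: "\<forall>j\<in>{1..m}. mat_vec n (adj_matrix E) (\<lambda>i. v i - u i) j = 0"
    and norm_le: "l1_norm n v \<le> l1_norm n u"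
    and S_sub: "S \<subseteq> {1..n}" and S_card: "card S = k"
    and S_top: "\<forall>i\<in>S. \<forall>i'\<in>{1..n} - S. \<bar>u i\<bar> \<ge> \<bar>u i'\<bar>"
  shows "l1_norm n (\<lambda>i. v i - u i)
           \<le> 2 / (1 - 2 * alpha_eps \<epsilon>) * l1_norm n (\<lambda>i. u i - restrict_vec u S i)"
proof -
  define y where "y = (\<lambda>i. v i - u i)"
  define N where "N = {1..n::nat}"
  define \<alpha> where "\<alpha> = alpha_eps \<epsilon>"
  have fN: "finite N" unfolding N_def by simp
  have fS: "finite S" by (rule finite_subset[OF S_sub]) simp
  have SN: "S \<subseteq> N" using S_sub unfolding N_def .
  have e1: "\<epsilon> < 1/2" using eps_small by simp
  have al0: "0 \<le> \<alpha>" unfolding \<alpha>_def alpha_eps_def using eps_pos e1 by simp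
  have al1: "2 * \<alpha> < 1"
  proof -
    have "2 * \<alpha> = 4*\<epsilon>/(1-2*\<epsilon>)" unfolding \<alpha>_def alpha_eps_def by simp
    also have "\<dots> < 1" using eps_small e1 by (simp add: divide_less_eq)
    finally show ?thesis .
  qed
  have nullS: "\<forall>j\<in>{1..m}. (\<Sum>i\<in>{1..n}. adj_matrix E j i * y i) = 0"
    using null unfolding mat_vec_def y_def .
  have nspS: "(\<Sum>i\<in>S. \<bar>y i\<bar>) \<le> \<alpha> * (\<Sum>i\<in>N. \<bar>y i\<bar>)"
  proof (cases "k = 0")
    case True
    then have "S = {}" using S_card fS by simp
    then show ?thesis using al0 by (simp add: sum_nonneg)
  next
    case False
    then have k0: "k > 0" by simp
    have kn: "k \<le> card {1..n}" using card_mono[OF _ S_sub] S_card by simp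
    obtain S0 where S0: "S0 \<subseteq> {1..n}" "card S0 = k"
      "\<forall>x\<in>S0. \<forall>z\<in>{1..n}-S0. \<bar>y z\<bar> \<le> \<bar>y x\<bar>"
      using top_k_exists[OF _ kn, of "\<lambda>i. \<bar>y i\<bar>"] by auto
    have fS0: "finite S0" by (rule finite_subset[OF S0(1)]) simp
    have "(\<Sum>i\<in>S. \<bar>y i\<bar>) \<le> (\<Sum>i\<in>S0. \<bar>y i\<bar>)"
    proof (rule top_compare[OF fS fS0])
      show "card S \<le> card S0" using S_card S0(2) by simp
      show "\<forall>x\<in>S0. \<forall>z\<in>S - S0. \<bar>y z\<bar> \<le> \<bar>y x\<bar>" using S0(3) S_sub by blast
    qed simp
    also have "\<dots> \<le> 2*\<epsilon>/(1-2*\<epsilon>) * (\<Sum>i\<in>{1..n}. \<bar>y i\<bar>)"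
      by (rule nsp[OF expander d_pos eps_pos e1 k0 nullS S0])
    finally show ?thesis unfolding \<alpha>_def alpha_eps_def N_def .
  qed
  define Sc where "Sc = N - S"
  have splitf: "sum f N = sum f S + sum f Sc" for f :: "nat \<Rightarrow> real"
    unfolding Sc_def using sum.subset_diff[OF SN fN, of f] by simp
  define YS where "YS = (\<Sum>i\<in>S. \<bar>y i\<bar>)"
  define YC where "YC = (\<Sum>i\<in>Sc. \<bar>y i\<bar>)"
  define US where "US = (\<Sum>i\<in>S. \<bar>u i\<bar>)"
  define UC where "UC = (\<Sum>i\<in>Sc. \<bar>u i\<bar>)"
  have vS: "US - YS \<le> (\<Sum>i\<in>S. \<bar>v i\<bar>)"
  proof -
    have "(\<Sum>i\<in>S. \<bar>u i\<bar> - \<bar>y i\<bar>) \<le> (\<Sum>i\<in>S. \<bar>v i\<bar>)"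
      by (rule sum_mono) (simp add: y_def abs_triangle_ineq2 abs_minus_commute)
    then show ?thesis unfolding US_def YS_def by (simp add: sum_subtractf)
  qed
  have vC: "YC - UC \<le> (\<Sum>i\<in>Sc. \<bar>v i\<bar>)"
  proof -
    have "(\<Sum>i\<in>Sc. \<bar>y i\<bar> - \<bar>u i\<bar>) \<le> (\<Sum>i\<in>Sc. \<bar>v i\<bar>)"
      by (rule sum_mono) (simp add: y_def abs_triangle_ineq2)
    then show ?thesis unfolding UC_def YC_def by (simp add: sum_subtractf)
  qed
  have nv: "l1_norm n v = (\<Sum>i\<in>S. \<bar>v i\<bar>) + (\<Sum>i\<in>Sc. \<bar>v i\<bar>)"
    unfolding l1_norm_def N_def[symmetric] by (rule splitf)
  have nu: "l1_norm n u = US + UC"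
    unfolding l1_norm_def N_def[symmetric] US_def UC_def by (rule splitf)
  have ny: "l1_norm n (\<lambda>i. v i - u i) = YS + YC"
    unfolding l1_norm_def N_def[symmetric] YS_def YC_def y_def by (rule splitf)
  have nr: "l1_norm n (\<lambda>i. u i - restrict_vec u S i) = UC"
  proof -
    have "l1_norm n (\<lambda>i. u i - restrict_vec u S i)
        = (\<Sum>i\<in>S. \<bar>u i - restrict_vec u S i\<bar>) + (\<Sum>i\<in>Sc. \<bar>u i - restrict_vec u S i\<bar>)"
      unfolding l1_norm_def N_def[symmetric] by (rule splitf)
    also have "(\<Sum>i\<in>S. \<bar>u i - restrict_vec u S i\<bar>) = 0"
      by (rule sum.neutral) (simp add: restrict_vec_def)
    also have "(\<Sum>i\<in>Sc. \<bar>u i - restrict_vec u S i\<bar>) = UC"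
      unfolding UC_def by (rule sum.cong[OF refl]) (simp add: restrict_vec_def Sc_def)
    finally show ?thesis by simp
  qed
  have Yeq: "(\<Sum>i\<in>N. \<bar>y i\<bar>) = YS + YC" unfolding YS_def YC_def by (rule splitf)
  have t1: "YC \<le> YS + 2 * UC" using vS vC nv nu norm_le by linarith
  have t2: "YS \<le> \<alpha> * (YS + YC)" using nspS unfolding YS_def Yeq .
  have "(YS + YC) - 2*\<alpha>*(YS+YC) \<le> 2 * UC" using t1 t2 by linarith
  then have "(1 - 2*\<alpha>) * (YS + YC) \<le> 2 * UC" by (simp add: algebra_simps)
  then have "YS + YC \<le> 2 * UC / (1 - 2*\<alpha>)" using al1 by (simp add: pos_le_divide_eq mult.commute)
  then show ?thesis unfolding ny nr \<alpha>_def by simp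
qed

end
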